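(* Let $A,B\subseteq\mathbb{N}$ and $L\in\mathbb{R}$. The limit $\lim_{n\to\infty}\frac{B(n)-A(n)}{n}$ exists and equals $L$ if and only if $\mu(B)-\mu(A)=L$ for every density measure $\mu$.
   Context: $\mathbb{N}=\{1,2,3,\dots\}$. For $A\subseteq\mathbb{N}$ let $A(n)=|A\cap[1,n]|$. Let $\mathcal{D}$ be the collection of all $A\subseteq\mathbb{N}$ for which the asymptotic density $d(A)=\lim_{n\to\infty}\frac{A(n)}{n}$ exists. A density measure is a function $\mu:\mathcal{P}(\mathbb{N})\to[0,1]$ with $\mu(\mathbb{N})=1$, $\mu(A\cup B)=\mu(A)+\mu(B)$ for all disjoint $A,B\subseteq\mathbb{N}$, and $\mu(A)=d(A)$ for all $A\in\mathcal{D}$. *)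

theory Defs
  imports Complex_Main
begin

text \<open>The positive integers N = {1,2,3,...} are represented as the subset {1..} of nat.
  Subsets of N are sets A :: nat set with A \<subseteq> {1..}.\<close>

definition pos_nat :: "nat set" where
  "pos_nat = {1..}"

definition counting :: "nat set \<Rightarrow> nat \<Rightarrow> nat" where
  "counting A n = card (A \<inter> {1..n})"

definition has_density :: "nat set \<Rightarrow> real \<Rightarrow> bool" where
  "has_density A d \<longleftrightarrow> ((\<lambda>n. real (counting A n) / real n) \<longlonglongrightarrow> d)"

text \<open>Density measure on the power set of N (values on sets not contained in N are irrelevant).\<close>
definition density_measure :: "(nat set \<Rightarrow> real) \<Rightarrow> bool" where
  "density_measure \<mu> \<longleftrightarrow>
     (\<forall>A. A \<subseteq> pos_nat \<longrightarrow> 0 \<le> \<mu> A \<and> \<mu> A \<le> 1) \<and>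
     \<mu> pos_nat = 1 \<and>
     (\<forall>A B. A \<subseteq> pos_nat \<longrightarrow> B \<subseteq> pos_nat \<longrightarrow> A \<inter> B = {} \<longrightarrow> \<mu> (A \<union> B) = \<mu> A + \<mu> B) \<and>
     (\<forall>A d. A \<subseteq> pos_nat \<longrightarrow> has_density A d \<longrightarrow> \<mu> A = d)"

end

theory Submission imports Defs "HOL-Analysis.Analysis" begin

lemma ex_ultra:
  fixes F :: "'a filter"
  assumes F: "F \<noteq> bot"
  shows "\<exists>U\<le>F. U \<noteq> bot \<and> (\<forall>P. eventually P U \<or> eventually (\<lambda>x. \<not> P x) U)"
proof -
  let ?R = "{(b, a). a \<noteq> bot \<and> a \<le> b \<and> b \<le> F}"
  have bot_notin_R: "c \<in> Chains ?R \<Longrightarrow> bot \<notin> c" for c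
    by (auto simp: Chains_def)
  have FR[simp]: "Field ?R = {G. G \<noteq> bot \<and> G \<le> F}"
    by (auto simp: Field_def bot_unique)
  have "\<exists>m\<in>Field ?R. \<forall>a\<in>Field ?R. (m, a) \<in> ?R \<longrightarrow> a = m"
  proof (rule Zorns_po_lemma)
    show "Partial_order ?R"
      by (auto simp: partial_order_on_def preorder_on_def
          antisym_def refl_on_def trans_def Field_def bot_unique)
    show "\<exists>u\<in>Field ?R. \<forall>a\<in>C. (a, u) \<in> ?R" if C: "C \<in> Chains ?R" for C
    proof (simp, intro exI conjI ballI)
      have Inf_C: "Inf C \<noteq> bot" "Inf C \<le> F" if "C \<noteq> {}"
      proof -
        from C that have "Inf C = bot \<longleftrightarrow> (\<exists>x\<in>C. x = bot)"
          unfolding trivial_limit_def by (intro eventually_Inf_base) (auto simp: Chains_def)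
        with C show "Inf C \<noteq> bot"
          by (simp add: bot_notin_R)
        from that obtain x where "x \<in> C" by auto
        with C show "Inf C \<le> F"
          by (auto intro!: Inf_lower2[of x] simp: Chains_def)
      qed
      then have [simp]: "inf F (Inf C) = (if C = {} then F else Inf C)"
        using C by (auto simp add: inf_absorb2)
      from C show "inf F (Inf C) \<noteq> bot"
        by (simp add: F Inf_C)
      from C show "inf F (Inf C) \<le> F"
        by (simp add: Chains_def Inf_C F)
      with C show "inf F (Inf C) \<le> x" "x \<le> F" if "x \<in> C" for x
        using that  by (auto intro: Inf_lower simp: Chains_def)
    qed
  qed
  then obtain U where U: "U \<noteq> bot" "U \<le> F" and max: "\<And>G. G \<noteq> bot \<Longrightarrow> G \<le> U \<Longrightarrow> G = U"
    by auto
  have "eventually P U \<or> eventually (\<lambda>x. \<not> P x) U" for P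
  proof (rule disjCI)
    assume "\<not> eventually (\<lambda>x. \<not> P x) U"
    then have "inf U (principal {x. P x}) \<noteq> bot"
      by (simp add: trivial_limit_def eventually_inf_principal)
    then have E: "U = inf U (principal {x. P x})"
      by (intro max[symmetric]) simp_all
    show "eventually P U"
      by (subst E) (simp add: eventually_inf_principal)
  qed
  with U show ?thesis by blast
qed

lemma ultra_tendsto:
  fixes U :: "'a filter" and g :: "'a \<Rightarrow> real"
  assumes U: "U \<noteq> bot" "\<And>P. eventually P U \<or> eventually (\<lambda>x. \<not> P x) U"
    and b: "\<And>x. 0 \<le> g x \<and> g x \<le> 1"
  shows "\<exists>l. (g \<longlongrightarrow> l) U"
proof -
  let ?G = "filtermap g U"
  have "?G \<noteq> bot" using U(1) by (simp add: filtermap_bot_iff)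
  moreover have "eventually (\<lambda>x. x \<in> {0..1}) ?G" using b by (simp add: eventually_filtermap)
  ultimately obtain l where l: "inf (nhds l) ?G \<noteq> bot"
    using compact_Icc[of "0::real" 1] unfolding compact_filter by blast
  have "(g \<longlongrightarrow> l) U"
    unfolding tendsto_def
  proof (intro allI impI)
    fix S assume S: "open S" "l \<in> S"
    show "eventually (\<lambda>x. g x \<in> S) U"
    proof (rule ccontr)
      assume "\<not> eventually (\<lambda>x. g x \<in> S) U"
      then have "eventually (\<lambda>y. y \<notin> S) ?G" using U(2)[of "\<lambda>x. g x \<in> S"]
        by (simp add: eventually_filtermap)
      moreover have "eventually (\<lambda>y. y \<in> S) (nhds l)" using S eventually_nhds by blast
      ultimately have "eventually (\<lambda>y. False) (inf (nhds l) ?G)"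
        unfolding eventually_inf by blast
      with l show False by (simp add: trivial_limit_def)
    qed
  qed
  then show ?thesis by blast
qed


lemma counting_Suc:
  "counting X (Suc n) = counting X n + (if Suc n \<in> X then 1 else 0)"
proof -
  have "X \<inter> {1..Suc n} = (if Suc n \<in> X then insert (Suc n) (X \<inter> {1..n}) else X \<inter> {1..n})"
    by (auto simp: le_Suc_eq)
  then show ?thesis unfolding counting_def by (simp add: card_insert_disjoint)
qed

lemma counting_le: "counting X n \<le> n"
proof -
  have "card (X \<inter> {1..n}) \<le> card {1..n}" by (intro card_mono) auto
  then show ?thesis unfolding counting_def by simp
qed

lemma counting_Un: "A \<inter> B = {} \<Longrightarrow> counting (A \<union> B) n = counting A n + counting B n"
  unfolding counting_def
  by (subst card_Un_disjoint[symmetric]) (auto simp: Int_Un_distrib2)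

lemma counting_pos: "counting pos_nat n = n"
proof -
  have "pos_nat \<inter> {1..n} = {1..n}" by (auto simp: pos_nat_def)
  then show ?thesis unfolding counting_def by simp
qed

lemma split_set:
  "\<exists>M1 M2. M1 \<inter> M2 = {} \<and> M1 \<union> M2 = M \<and>
     (\<forall>n. counting M1 n = (counting M n + 1) div 2 \<and> counting M2 n = counting M n div 2)"
proof -
  define M1 where "M1 = {x\<in>M. even (card (M \<inter> {1..<x}))}"
  define M2 where "M2 = M - M1"
  have c1: "counting M1 n = (counting M n + 1) div 2" for n
  proof (induction n)
    case 0
    then show ?case by (simp add: counting_def)
  next
    case (Suc n)
    have "M \<inter> {1..<Suc n} = M \<inter> {1..n}" by auto
    then have iff: "Suc n \<in> M1 \<longleftrightarrow> Suc n \<in> M \<and> even (counting M n)"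
      unfolding M1_def counting_def by simp
    show ?case
    proof (cases "even (counting M n)")
      case True
      then obtain k where "counting M n = 2*k" by blast
      then show ?thesis using Suc iff by (simp add: counting_Suc)
    next
      case False
      then obtain k where "counting M n = 2*k+1" using oddE by blast
      then show ?thesis using Suc iff by (simp add: counting_Suc)
    qed
  qed
  have d: "M1 \<inter> M2 = {}" "M1 \<union> M2 = M" unfolding M1_def M2_def by auto
  have "counting M n = counting M1 n + counting M2 n" for n
    using counting_Un[OF d(1), of n] d(2) by simp
  then have "counting M2 n = counting M n div 2" for n using c1[of n] by simp
  with c1 d show ?thesis by blast
qed

lemma key_limit:
  fixes f e h :: "nat \<Rightarrow> real"
  assumes f: "f \<longlonglongrightarrow> L" and e: "\<And>n. \<bar>e n\<bar> \<le> 1"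
    and h: "\<And>n. n \<ge> 1 \<Longrightarrow> h n = 1/2 + f n / 2 + e n / real n"
  shows "h \<longlonglongrightarrow> (1 + L) / 2"
proof -
  have e0: "(\<lambda>n. e n / real n) \<longlonglongrightarrow> 0"
  proof (rule Lim_null_comparison)
    show "\<forall>\<^sub>F n in sequentially. norm (e n / real n) \<le> 1 / real n"
      using e by (intro always_eventually allI) (auto intro!: divide_right_mono simp: abs_divide)
    show "(\<lambda>n. 1 / real n) \<longlonglongrightarrow> 0" by (rule lim_const_over_n)
  qed
  have "(\<lambda>n. 1/2 + f n / 2 + e n / real n) \<longlonglongrightarrow> 1/2 + L/2 + 0"
    by (intro tendsto_intros f e0) auto
  then have "(\<lambda>n. 1/2 + f n / 2 + e n / real n) \<longlonglongrightarrow> (1 + L) / 2" by (simp add: add_divide_distrib)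
  moreover have "\<forall>\<^sub>F n in sequentially. 1/2 + f n / 2 + e n / real n = h n"
    using h eventually_at_top_linorder by fastforce
  ultimately show ?thesis by (rule Lim_transform_eventually)
qed

theorem proposition3p14:
  fixes A B :: "nat set" and L :: real
  assumes "A \<subseteq> pos_nat" and "B \<subseteq> pos_nat"
  shows "((\<lambda>n. (real (counting B n) - real (counting A n)) / real n) \<longlonglongrightarrow> L)
         \<longleftrightarrow> (\<forall>\<mu>. density_measure \<mu> \<longrightarrow> \<mu> B - \<mu> A = L)"
proof
  define f where "f = (\<lambda>n. (real (counting B n) - real (counting A n)) / real n)"
  assume lim: "(\<lambda>n. (real (counting B n) - real (counting A n)) / real n) \<longlonglongrightarrow> L"
  then have flim: "f \<longlonglongrightarrow> L" unfolding f_def .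
  show "\<forall>\<mu>. density_measure \<mu> \<longrightarrow> \<mu> B - \<mu> A = L"
  proof (intro allI impI)
    fix \<mu> assume dm: "density_measure \<mu>"
    have add: "\<And>X Y. X \<subseteq> pos_nat \<Longrightarrow> Y \<subseteq> pos_nat \<Longrightarrow> X \<inter> Y = {} \<Longrightarrow> \<mu> (X \<union> Y) = \<mu> X + \<mu> Y"
      and one: "\<mu> pos_nat = 1"
      and dens: "\<And>X d. X \<subseteq> pos_nat \<Longrightarrow> has_density X d \<Longrightarrow> \<mu> X = d"
      using dm unfolding density_measure_def by blast+
    define A' where "A' = A - B"
    define B' where "B' = B - A"
    define C where "C = A \<inter> B"
    define M where "M = pos_nat - (A' \<union> B')"
    obtain M1 M2 where MM: "M1 \<inter> M2 = {}" "M1 \<union> M2 = M"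
      and cM: "\<And>n. counting M1 n = (counting M n + 1) div 2 \<and> counting M2 n = counting M n div 2"
      using split_set[of M] by blast
    have subs: "A' \<subseteq> pos_nat" "B' \<subseteq> pos_nat" "C \<subseteq> pos_nat" "M1 \<subseteq> pos_nat" "M2 \<subseteq> pos_nat"
      using assms MM unfolding A'_def B'_def C_def M_def by auto
    have eA: "A = A' \<union> C" and eB: "B = B' \<union> C" unfolding A'_def B'_def C_def by auto
    have dA: "A' \<inter> C = {}" and dB: "B' \<inter> C = {}" unfolding A'_def B'_def C_def by auto
    have muA: "\<mu> A = \<mu> A' + \<mu> C" using add[OF subs(1) subs(3) dA] eA by simp
    have muB: "\<mu> B = \<mu> B' + \<mu> C" using add[OF subs(2) subs(3) dB] eB by simp
    have dAB: "A' \<inter> B' = {}" unfolding A'_def B'_def by auto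
    have eP: "pos_nat = A' \<union> (B' \<union> (M1 \<union> M2))"
      using subs MM unfolding M_def by auto
    have d1: "B' \<inter> (M1 \<union> M2) = {}" "A' \<inter> (B' \<union> (M1 \<union> M2)) = {}"
      using MM dAB unfolding M_def by auto
    have d2: "B' \<inter> M1 = {}" "B' \<inter> M2 = {}" using d1 by auto
    have muP: "1 = \<mu> A' + \<mu> B' + \<mu> M1 + \<mu> M2"
    proof -
      have "\<mu> (M1 \<union> M2) = \<mu> M1 + \<mu> M2" using add[OF subs(4,5) MM(1)] .
      moreover have "\<mu> (B' \<union> (M1 \<union> M2)) = \<mu> B' + \<mu> (M1 \<union> M2)"
        using add[OF subs(2) _ d1(1)] subs by auto
      moreover have "\<mu> (A' \<union> (B' \<union> (M1 \<union> M2))) = \<mu> A' + \<mu> (B' \<union> (M1 \<union> M2))"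
        using add[OF subs(1) _ d1(2)] subs by auto
      ultimately show ?thesis using one eP by simp
    qed
    have cnt: "real n = real (counting A' n) + real (counting B' n) + real (counting M1 n) + real (counting M2 n)" for n
    proof -
      have "counting pos_nat n = counting A' n + (counting B' n + (counting M1 n + counting M2 n))"
        by (subst eP, simp only: counting_Un d1 MM(1))
      then show ?thesis by (simp add: counting_pos)
    qed
    have cAB: "real (counting B n) - real (counting A n) = real (counting B' n) - real (counting A' n)" for n
      using counting_Un[OF dA, of n] counting_Un[OF dB, of n] eA eB by simp
    define e where "e n = (real (counting M1 n) - real (counting M2 n)) / 2" for n
    have eb: "\<bar>e n\<bar> \<le> 1" for n
    proof -
      have "counting M1 n = counting M2 n \<or> counting M1 n = counting M2 n + 1"
        using cM[of n] by presburger
      then show ?thesis unfolding e_def by auto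
    qed
    have eb2: "\<bar>- e n\<bar> \<le> 1" for n using eb[of n] by simp
    have h1: "real (counting (B' \<union> M1) n) / real n = 1/2 + f n / 2 + e n / real n" if "n \<ge> 1" for n
    proof -
      have "real (counting (B' \<union> M1) n) = real (counting B' n) + real (counting M1 n)"
        using counting_Un[OF d2(1)] by simp
      then have X: "real (counting (B' \<union> M1) n) = real n / 2 + (real (counting B' n) - real (counting A' n)) / 2 + (e n)"
        using cnt[of n] unfolding e_def by (simp add: field_simps)
      have fn: "f n = (real (counting B' n) - real (counting A' n)) / real n"
        unfolding f_def using cAB[of n] by simp
      have "real n > 0" using that by simp
      then show ?thesis unfolding X fn by (simp add: field_simps)
    qed
    have h2: "real (counting (B' \<union> M2) n) / real n = 1/2 + f n / 2 + (- e n) / real n" if "n \<ge> 1" for n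
    proof -
      have "real (counting (B' \<union> M2) n) = real (counting B' n) + real (counting M2 n)"
        using counting_Un[OF d2(2)] by simp
      then have X: "real (counting (B' \<union> M2) n) = real n / 2 + (real (counting B' n) - real (counting A' n)) / 2 + (- e n)"
        using cnt[of n] unfolding e_def by (simp add: field_simps)
      have fn: "f n = (real (counting B' n) - real (counting A' n)) / real n"
        unfolding f_def using cAB[of n] by simp
      have "real n > 0" using that by simp
      then show ?thesis unfolding X fn by (simp add: field_simps)
    qed
    have "has_density (B' \<union> M1) ((1 + L) / 2)"
      unfolding has_density_def by (rule key_limit[OF flim eb h1])
    then have m1: "\<mu> B' + \<mu> M1 = (1 + L) / 2"
      using dens[of "B' \<union> M1"] add[OF subs(2,4) d2(1)] subs by auto
    have "has_density (B' \<union> M2) ((1 + L) / 2)"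
      unfolding has_density_def by (rule key_limit[OF flim eb2 h2])
    then have m2: "\<mu> B' + \<mu> M2 = (1 + L) / 2"
      using dens[of "B' \<union> M2"] add[OF subs(2,5) d2(2)] subs by auto
    show "\<mu> B - \<mu> A = L" using muA muB muP m1 m2 by (simp add: field_simps)
  qed
next
  assume H: "\<forall>\<mu>. density_measure \<mu> \<longrightarrow> \<mu> B - \<mu> A = L"
  define f where "f = (\<lambda>n. (real (counting B n) - real (counting A n)) / real n)"
  have "f \<longlonglongrightarrow> L"
  proof (rule ccontr)
    assume "\<not> f \<longlonglongrightarrow> L"
    then obtain \<epsilon> :: real where ep: "\<epsilon> > 0" and fr: "\<not> eventually (\<lambda>n. dist (f n) L < \<epsilon>) sequentially"
      unfolding tendsto_iff by blast
    define S where "S = {n. \<epsilon> \<le> dist (f n) L}"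
    define F where "F = inf sequentially (principal S)"
    have "F \<noteq> bot"
    proof
      assume "F = bot"
      then have "eventually (\<lambda>n. False) F" by simp
      then have "eventually (\<lambda>n. n \<in> S \<longrightarrow> False) sequentially"
        unfolding F_def eventually_inf_principal .
      then have "eventually (\<lambda>n. dist (f n) L < \<epsilon>) sequentially"
        by (rule eventually_mono) (auto simp: S_def)
      with fr show False by blast
    qed
    then obtain U where UF: "U \<le> F" and Ub: "U \<noteq> bot"
      and Uu: "\<And>P. eventually P U \<or> eventually (\<lambda>x. \<not> P x) U"
      using ex_ultra[of F] by blast
    have Useq: "U \<le> sequentially" using UF unfolding F_def by (meson inf_le1 order_trans)
    have "eventually (\<lambda>n. n \<in> S) F" unfolding F_def by (simp add: eventually_inf_principal)
    then have evS: "eventually (\<lambda>n. \<epsilon> \<le> dist (f n) L) U"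
      using UF unfolding S_def by (simp add: filter_leD)
    define g where "g X n = real (counting X n) / real n" for X n
    have gb: "0 \<le> g X n \<and> g X n \<le> 1" for X n
      using counting_le[of X n] unfolding g_def by (cases "n = 0") (auto simp: divide_le_eq_1)
    define \<mu> where "\<mu> X = Lim U (g X)" for X
    have glim: "(g X \<longlongrightarrow> \<mu> X) U" for X
    proof -
      obtain l where "(g X \<longlongrightarrow> l) U" using ultra_tendsto[of U "g X", OF Ub Uu gb] by blast
      then show ?thesis unfolding \<mu>_def using Ub tendsto_Lim by (metis)
    qed
    have dm: "density_measure \<mu>"
      unfolding density_measure_def
    proof (intro conjI allI impI)
      fix X :: "nat set"
      show "0 \<le> \<mu> X"
        using tendsto_le[OF Ub glim tendsto_const] gb by (simp add: always_eventually)
      show "\<mu> X \<le> 1"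
        using tendsto_le[OF Ub tendsto_const glim] gb by (simp add: always_eventually)
    next
      have "eventually (\<lambda>n. g pos_nat n = 1) sequentially"
        unfolding g_def counting_pos eventually_at_top_linorder by (intro exI[of _ 1]) auto
      then have "(g pos_nat \<longlongrightarrow> 1) U"
        using Useq by (intro tendsto_eventually) (simp add: filter_leD)
      then show "\<mu> pos_nat = 1" using tendsto_unique[OF Ub glim] by blast
    next
      fix X Y :: "nat set" assume "X \<inter> Y = {}"
      then have "g (X \<union> Y) = (\<lambda>n. g X n + g Y n)"
        unfolding g_def by (auto simp: counting_Un add_divide_distrib)
      then have "(g (X \<union> Y) \<longlongrightarrow> \<mu> X + \<mu> Y) U" using tendsto_add[OF glim glim] by simp
      then show "\<mu> (X \<union> Y) = \<mu> X + \<mu> Y" using tendsto_unique[OF Ub glim] by blast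
    next
      fix X :: "nat set" and d :: real assume "has_density X d"
      then have "(g X \<longlongrightarrow> d) sequentially" unfolding has_density_def g_def by simp
      then have "(g X \<longlongrightarrow> d) U" using tendsto_mono Useq by blast
      then show "\<mu> X = d" using tendsto_unique[OF Ub glim] by blast
    qed
    then have eq: "\<mu> B - \<mu> A = L" using H by blast
    have "f = (\<lambda>n. g B n - g A n)" unfolding f_def g_def by (auto simp: diff_divide_distrib)
    then have "(f \<longlongrightarrow> \<mu> B - \<mu> A) U" using tendsto_diff[OF glim glim] by simp
    then have "((\<lambda>n. dist (f n) L) \<longlongrightarrow> dist (\<mu> B - \<mu> A) L) U"
      by (intro tendsto_intros)
    then have "\<epsilon> \<le> dist (\<mu> B - \<mu> A) L"
      using tendsto_le[OF Ub _ tendsto_const evS] by blast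
    with eq ep show False by simp
  qed
  then show "(\<lambda>n. (real (counting B n) - real (counting A n)) / real n) \<longlonglongrightarrow> L"
    unfolding f_def .
qed

end
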